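(* Let $N>1$, $d\ge1$, $m\ge1$, and let $f:\mathbb{R}^{N\times d}\times\mathbb{R}^{N\times 3}\to\mathbb{R}^m$ be $\mathrm{O}(3)$-invariant ($f(s,\vec r o^T)=f(s,\vec r)$ for all $o\in\mathrm{O}(3)$), translation-invariant ($f(s,\vec r+\mathbf 1t)=f(s,\vec r)$ for all $t\in\mathbb{R}^{1\times 3}$) and permutation-invariant ($f(\pi(s),\pi(\vec r))=f(s,\vec r)$ for all $\pi\in S_N$). Let $g$ be as in the context and, for a molecule $(s,\vec r)$, let $z_1(s,\vec r)=\rho\big(\sum_{j=1}^N\varphi(\mathrm{Concatenate}(\vec r_{1j}\vec E_1^T,\tilde s_j))\big)$ with $\vec E_1=g(\mathrm{LE}_1)$. Then there exist functions $\varphi,\rho$ and $h$ (with $h$ taking values in $\mathbb{R}^m$) such that the map $(s,\vec r)\mapsto\frac{1}{N!}\sum_{\pi\in S_N}h\big(z_1(\pi(s),\pi(\vec r))\big)$ is permutation-invariant and equals $f(s,\vec r)$ for all $(s,\vec r)$.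
   Context: For a molecule with features $s\in\mathbb{R}^{N\times d}$ (row $s_j$) and coordinates $\vec r\in\mathbb{R}^{N\times 3}$ (row $\vec r_j$), set $\vec r_{ij}=\vec r_i-\vec r_j$, node identity features $\tilde s_j=\mathrm{Concatenate}(s_j,j)\in\mathbb{R}^{d+1}$ and $\mathrm{LE}_i=\{(\tilde s_j,\vec r_{ij}): j=1,\dots,N\}$. $\mathbf 1\in\mathbb{R}^{N\times1}$ is the all-ones column. $S_N$ is the group of permutations of $\{1,\dots,N\}$; for a matrix $M$ with $N$ rows and $\pi\in S_N$, $\pi(M)$ is the matrix whose $i$-th row is the $\pi^{-1}(i)$-th row of $M$. $\mathrm{O}(3)=\{Q\in\mathbb{R}^{3\times3}:QQ^T=I\}$. The function $g$ maps such local environments to $\mathbb{R}^{3\times3}$, satisfies $g(\{(\tilde s_j,\vec r_{ij}o^T)\}_j)=g(\{(\tilde s_j,\vec r_{ij})\}_j)o^T$ for all $o\in\mathrm{O}(3)$, and for every molecule and $i$ the matrix $\vec E_i=g(\mathrm{LE}_i)$, with $k=\mathrm{rank}(\vec E_i)$, has its first $k$ rows forming an orthonormal basis of $\mathrm{span}\{\vec r_{ij}:j\}$ and its remaining rows zero. *)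

theory Defs
  imports "HOL-Analysis.Analysis"
begin

text \<open>A molecule with N atoms: rows are indexed by 1..N (nat); the matrices
  s (N x d) and r (N x 3) are functions on nat, required to vanish outside 1..N.\<close>

definition wf_mol :: "nat \<Rightarrow> (nat \<Rightarrow> real^'d) \<Rightarrow> (nat \<Rightarrow> real^3) \<Rightarrow> bool" where
  "wf_mol N s r \<longleftrightarrow> (\<forall>k. k \<notin> {1..N} \<longrightarrow> s k = 0 \<and> r k = 0)"

definition O3 :: "(real^3^3) set" where
  "O3 = {Q. Q ** transpose Q = mat 1}"

definition perm_rows :: "(nat \<Rightarrow> nat) \<Rightarrow> (nat \<Rightarrow> 'a) \<Rightarrow> (nat \<Rightarrow> 'a)" where
  "perm_rows \<pi> M = (\<lambda>i. M (inv \<pi> i))"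

text \<open>r o^T: each row vector r_j becomes r_j o^T, i.e. the column vector o r_j.\<close>
definition rot_rows :: "real^3^3 \<Rightarrow> (nat \<Rightarrow> real^3) \<Rightarrow> (nat \<Rightarrow> real^3)" where
  "rot_rows Q r = (\<lambda>j. Q *v r j)"

definition transl_rows :: "nat \<Rightarrow> real^3 \<Rightarrow> (nat \<Rightarrow> real^3) \<Rightarrow> (nat \<Rightarrow> real^3)" where
  "transl_rows N t r = (\<lambda>j. if j \<in> {1..N} then r j + t else r j)"

definition tilde :: "(nat \<Rightarrow> real^'d) \<Rightarrow> nat \<Rightarrow> (real^'d) \<times> real" where
  "tilde s j = (s j, real j)"

definition LE :: "nat \<Rightarrow> (nat \<Rightarrow> real^'d) \<Rightarrow> (nat \<Rightarrow> real^3) \<Rightarrow> nat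
                   \<Rightarrow> (((real^'d) \<times> real) \<times> (real^3)) set" where
  "LE N s r i = {(tilde s j, r i - r j) | j. j \<in> {1..N}}"

definition rows3 :: "real^3^3 \<Rightarrow> (real^3) list" where
  "rows3 E = [E $ 1, E $ 2, E $ 3]"

definition frame_ok :: "real^3^3 \<Rightarrow> (real^3) set \<Rightarrow> bool" where
  "frame_ok E V \<longleftrightarrow>
     (let k = rank E; rs = rows3 E in
       (\<forall>a<k. \<forall>b<k. (rs ! a) \<bullet> (rs ! b) = (if a = b then 1 else 0)) \<and>
       span (set (take k rs)) = span V \<and>
       (\<forall>v \<in> set (drop k rs). v = 0))"

text \<open>Row vector r_1j E_1^T is the column vector E_1 r_1j. Latent vectors are
  nat-indexed real vectors (nat => real), summed componentwise.\<close>
definition z1 :: "nat \<Rightarrow> ((((real^'d) \<times> real) \<times> (real^3)) set \<Rightarrow> real^3^3)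
      \<Rightarrow> ((real^3) \<times> ((real^'d) \<times> real) \<Rightarrow> (nat \<Rightarrow> real))
      \<Rightarrow> ((nat \<Rightarrow> real) \<Rightarrow> (nat \<Rightarrow> real))
      \<Rightarrow> (nat \<Rightarrow> real^'d) \<Rightarrow> (nat \<Rightarrow> real^3) \<Rightarrow> (nat \<Rightarrow> real)" where
  "z1 N g \<phi> \<rho> s r =
     \<rho> (\<lambda>c. \<Sum>j\<in>{1..N}. \<phi> (g (LE N s r 1) *v (r 1 - r j), tilde s j) c)"

end

theory Submission imports Defs "HOL-Analysis.Cross3" "HOL-Library.Nat_Bijection" "HOL-Library.Countable"
begin
unbundle cross3_syntax

lemma mmt_entry: "((A::real^'n^'m) ** transpose A) $ i $ j = A $ i \<bullet> A $ j"
  by (simp add: matrix_matrix_mult_def transpose_def inner_vec_def mult.commute)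

lemma O3_rows:
  fixes a b c :: "real^3"
  assumes "a\<bullet>a = 1" "b\<bullet>b = 1" "c\<bullet>c = 1" "a\<bullet>b = 0" "a\<bullet>c = 0" "b\<bullet>c = 0"
  shows "(vector [a,b,c] :: real^3^3) \<in> O3"
proof -
  have "(vector [a,b,c] ** transpose (vector [a,b,c])) $ i $ j = mat 1 $ i $ j" for i j :: 3
    unfolding mmt_entry using exhaust_3[of i] exhaust_3[of j] assms
    by (auto simp: mat_def inner_commute)
  then show ?thesis
    by (simp add: vec_eq_iff O3_def)
qed

lemma vec3_eq: "(A::real^3^3) = vector [A$1, A$2, A$3]"
proof -
  have "A$i = vector [A$1, A$2, A$3] $ i" for i using exhaust_3[of i] by auto
  then show ?thesis by (simp add: vec_eq_iff)
qed

lemma mv3: "((vector [a,b,c] :: real^3^3) *v x) = vector [a \<bullet> x, b \<bullet> x, c \<bullet> x]"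
proof -
  have "((vector [a,b,c] :: real^3^3) *v x) $ i = vector [a \<bullet> x, b \<bullet> x, c \<bullet> x] $ i" for i
    using exhaust_3[of i] by (auto simp: matrix_vector_mul_component)
  then show ?thesis by (simp add: vec_eq_iff)
qed

lemma cross_unit:
  fixes a b :: "real^3"
  assumes "a\<bullet>a = 1" "b\<bullet>b = 1" "a\<bullet>b = 0"
  shows "(a \<times> b) \<bullet> (a \<times> b) = 1"
  using norm_cross[of a b] assms by (simp add: power2_norm_eq_inner)

lemma frame_Q:
  assumes F: "frame_ok E V"
  shows "\<exists>Q\<in>O3. \<forall>x\<in>V. Q *v x = E *v x"
proof -
  define e1 e2 e3 where "e1 = E$1" and "e2 = E$2" and "e3 = E$3"
  have EE: "E = vector [e1,e2,e3]" unfolding e1_def e2_def e3_def by (rule vec3_eq)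
  have EV: "E *v x = vector [e1 \<bullet> x, e2 \<bullet> x, e3 \<bullet> x]" for x
    by (subst EE) (rule mv3)
  have rk: "rank E \<le> 3" using rank_bound[of E] by simp
  have Fk: "(\<forall>a<rank E. \<forall>b<rank E. ([e1,e2,e3] ! a) \<bullet> ([e1,e2,e3] ! b) = (if a = b then 1 else 0)) \<and>
       span (set (take (rank E) [e1,e2,e3])) = span V \<and>
       (\<forall>v \<in> set (drop (rank E) [e1,e2,e3]). v = 0)"
    using F unfolding frame_ok_def Let_def rows3_def e1_def e2_def e3_def by simp
  have orth: "\<And>a b. a < rank E \<Longrightarrow> b < rank E \<Longrightarrow> ([e1,e2,e3] ! a) \<bullet> ([e1,e2,e3] ! b) = (if a = b then 1 else 0)"
    using Fk by blast
  have Vsp: "x \<in> span (set (take (rank E) [e1,e2,e3]))" if "x \<in> V" for x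
    using Fk that span_base by blast
  consider "rank E = 0" | "rank E = 1" | "rank E = 2" | "rank E = 3" using rk by linarith
  then show ?thesis
  proof cases
    case 1
    then have z: "e1 = 0" "e2 = 0" "e3 = 0" using Fk 1 by auto
    have "x = 0" if "x \<in> V" for x using Vsp[OF that] 1 by simp
    then have "\<forall>x\<in>V. mat 1 *v x = E *v x" by (metis matrix_vector_mult_0_right matrix_vector_mul_lid)
    then show ?thesis by (intro bexI[of _ "mat 1"]) (auto simp: O3_def)
  next
    case 2
    then have o: "e1 \<bullet> e1 = 1" using orth[of 0 0] by auto
    have z: "e2 = 0" "e3 = 0" using Fk 2 by auto
    obtain y :: "real^3" where y: "y \<noteq> 0" "orthogonal e1 y"
      using orthogonal_to_vector_exists[of e1] by auto
    define u where "u = y /\<^sub>R norm y"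
    have u: "u \<bullet> u = 1" "e1 \<bullet> u = 0"
      using y unfolding u_def orthogonal_def
      by (auto simp: power2_norm_eq_inner[symmetric] power2_eq_square)
    have c: "(e1 \<times> u) \<bullet> (e1 \<times> u) = 1" using cross_unit[OF o u(1) u(2)] .
    have Q: "vector [e1, u, e1 \<times> u] \<in> O3"
      using O3_rows[OF o u(1) c u(2)] by (simp add: dot_cross_self)
    have "vector [e1, u, e1 \<times> u] *v x = E *v x" if "x \<in> V" for x
    proof -
      have sp: "x \<in> span {e1}" using Vsp[OF that] 2 by simp
      have "orthogonal u x" by (rule orthogonal_to_span[OF sp]) (use u in \<open>auto simp: orthogonal_def inner_commute\<close>)
      moreover have "orthogonal (e1 \<times> u) x" by (rule orthogonal_to_span[OF sp]) (auto simp: orthogonal_def dot_cross_self)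
      ultimately show ?thesis by (simp add: mv3 EV z orthogonal_def)
    qed
    then show ?thesis using Q by blast
  next
    case 3
    then have o: "e1 \<bullet> e1 = 1" "e2 \<bullet> e2 = 1" "e1 \<bullet> e2 = 0"
      using orth[of 0 0] orth[of 1 1] orth[of 0 1] by auto
    have z: "e3 = 0" using Fk 3 by (simp add: numeral_2_eq_2)
    have c: "(e1 \<times> e2) \<bullet> (e1 \<times> e2) = 1" using cross_unit[OF o] .
    have Q: "vector [e1, e2, e1 \<times> e2] \<in> O3"
      using O3_rows[OF o(1,2) c o(3)] by (simp add: dot_cross_self)
    have "vector [e1, e2, e1 \<times> e2] *v x = E *v x" if "x \<in> V" for x
    proof -
      have sp: "x \<in> span {e1, e2}" using Vsp[OF that] 3 by (simp add: numeral_2_eq_2)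
      have "orthogonal (e1 \<times> e2) x" by (rule orthogonal_to_span[OF sp]) (auto simp: orthogonal_def dot_cross_self)
      then show ?thesis by (simp add: mv3 EV z orthogonal_def)
    qed
    then show ?thesis using Q by blast
  next
    case 4
    then have o: "e1 \<bullet> e1 = 1" "e2 \<bullet> e2 = 1" "e3 \<bullet> e3 = 1" "e1 \<bullet> e2 = 0" "e1 \<bullet> e3 = 0" "e2 \<bullet> e3 = 0"
      using orth[of 0 0] orth[of 1 1] orth[of 2 2] orth[of 0 1] orth[of 0 2] orth[of 1 2] 4 by auto
    show ?thesis using O3_rows[OF o] EE by auto
  qed
qed


definition valf :: "real^3 \<Rightarrow> real^'d \<Rightarrow> nat \<Rightarrow> real" where
  "valf v x q = (if even q then v $ from_nat (q div 2) else x $ from_nat (q div 2))"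

definition phi0 :: "(real^3) \<times> ((real^'d) \<times> real) \<Rightarrow> nat \<Rightarrow> real" where
  "phi0 p c = (case p of (v,(x,t)) \<Rightarrow> (case prod_decode c of (a,q) \<Rightarrow> if t = real a then valf v x q else 0))"

definition decS :: "nat \<Rightarrow> (nat \<Rightarrow> real) \<Rightarrow> nat \<Rightarrow> real^'d" where
  "decS N z = (\<lambda>a. if a \<in> {1..N} then (\<chi> i. z (prod_encode (a, 2 * to_nat i + 1))) else 0)"

definition decR :: "nat \<Rightarrow> (nat \<Rightarrow> real) \<Rightarrow> nat \<Rightarrow> real^3" where
  "decR N z = (\<lambda>a. if a \<in> {1..N} then (\<chi> i. z (prod_encode (a, 2 * to_nat i))) else 0)"

lemma code_eval:
  fixes s :: "nat \<Rightarrow> real^'d" and r :: "nat \<Rightarrow> real^3"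
  shows "(\<Sum>j\<in>{1..N}. phi0 (E *v (r 1 - r j), tilde s j) (prod_encode (a,q)))
     = (if a \<in> {1..N} then valf (E *v (r 1 - r a)) (s a) q else 0)"
proof -
  have "(\<Sum>j\<in>{1..N}. phi0 (E *v (r 1 - r j), tilde s j) (prod_encode (a,q)))
     = (\<Sum>j\<in>{1..N}. if j = a then valf (E *v (r 1 - r j)) (s j) q else 0)"
    by (rule sum.cong) (auto simp: phi0_def tilde_def)
  also have "\<dots> = (if a \<in> {1..N} then valf (E *v (r 1 - r a)) (s a) q else 0)"
    by simp
  finally show ?thesis .
qed

lemma decode:
  fixes s :: "nat \<Rightarrow> real^'d" and r :: "nat \<Rightarrow> real^3" and N :: nat and E :: "real^3^3"
  defines "z \<equiv> (\<lambda>c. \<Sum>j\<in>{1..N}. phi0 (E *v (r 1 - r j), tilde s j) c)"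
  shows "decS N z = (\<lambda>a. if a \<in> {1..N} then s a else 0)"
    and "decR N z = (\<lambda>a. if a \<in> {1..N} then E *v (r 1 - r a) else 0)"
  unfolding decS_def decR_def z_def code_eval
  by (auto simp: valf_def vec_eq_iff)

lemma mv_neg: "(- (Q::real^'n^'m)) *v x = - (Q *v x)"
  by (simp add: vec_eq_iff matrix_vector_mult_def sum_negf)

lemma wf_perm:
  assumes "wf_mol N s r" "\<pi> permutes {1..N}"
  shows "wf_mol N (perm_rows \<pi> s) (perm_rows \<pi> r)"
proof -
  have "inv \<pi> permutes {1..N}" using assms(2) by (rule permutes_inv)
  then have "k \<notin> {1..N} \<Longrightarrow> inv \<pi> k = k" for k by (simp add: permutes_not_in)
  then show ?thesis using assms(1) by (auto simp: wf_mol_def perm_rows_def)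
qed

theorem proposition8:
  fixes N :: nat
    and f :: "(nat \<Rightarrow> real^'d) \<Rightarrow> (nat \<Rightarrow> real^3) \<Rightarrow> real^'m"
    and g :: "(((real^'d) \<times> real) \<times> (real^3)) set \<Rightarrow> real^3^3"
  assumes N: "N > 1"
    and f_O3: "\<And>s r Q. wf_mol N s r \<Longrightarrow> Q \<in> O3 \<Longrightarrow> f s (rot_rows Q r) = f s r"
    and f_transl: "\<And>s r t. wf_mol N s r \<Longrightarrow> f s (transl_rows N t r) = f s r"
    and f_perm: "\<And>s r \<pi>. wf_mol N s r \<Longrightarrow> \<pi> permutes {1..N} \<Longrightarrow>
                   f (perm_rows \<pi> s) (perm_rows \<pi> r) = f s r"
    and g_equiv: "\<And>s r i Q. wf_mol N s r \<Longrightarrow> i \<in> {1..N} \<Longrightarrow> Q \<in> O3 \<Longrightarrow>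
                   g {(tilde s j, Q *v (r i - r j)) | j. j \<in> {1..N}} = g (LE N s r i) ** transpose Q"
    and g_frame: "\<And>s r i. wf_mol N s r \<Longrightarrow> i \<in> {1..N} \<Longrightarrow>
                   frame_ok (g (LE N s r i)) {r i - r j | j. j \<in> {1..N}}"
  shows "\<exists>(\<phi> :: (real^3) \<times> ((real^'d) \<times> real) \<Rightarrow> (nat \<Rightarrow> real))
           (\<rho> :: (nat \<Rightarrow> real) \<Rightarrow> (nat \<Rightarrow> real))
           (h :: (nat \<Rightarrow> real) \<Rightarrow> real^'m).
     (let F = (\<lambda>s r. (1 / fact N) *\<^sub>R
                (\<Sum>\<pi>\<in>{\<pi>. \<pi> permutes {1..N}}. h (z1 N g \<phi> \<rho> (perm_rows \<pi> s) (perm_rows \<pi> r))))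
      in (\<forall>s r \<pi>. wf_mol N s r \<longrightarrow> \<pi> permutes {1..N} \<longrightarrow>
            F (perm_rows \<pi> s) (perm_rows \<pi> r) = F s r)
       \<and> (\<forall>s r. wf_mol N s r \<longrightarrow> F s r = f s r))"
proof -
  define E where "E s r = g (LE N s r 1)" for s r
  have one: "(1::nat) \<in> {1..N}" using N by simp
  have canon: "f s r = f s (\<lambda>a. if a \<in> {1..N} then E s r *v (r 1 - r a) else 0)"
    if wf: "wf_mol N s r" for s r
  proof -
    obtain Q where Q: "Q \<in> O3" and QE: "\<forall>x\<in>{r 1 - r j | j. j \<in> {1..N}}. Q *v x = E s r *v x"
      using frame_Q[OF g_frame[OF wf one]] unfolding E_def by blast
    have "(- Q) ** transpose (- Q) = Q ** transpose Q"
      by (simp add: vec_eq_iff matrix_matrix_mult_def transpose_def)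
    then have mQ: "- Q \<in> O3" using Q by (simp add: O3_def)
    have wf2: "wf_mol N s (rot_rows (- Q) r)" using wf by (simp add: wf_mol_def rot_rows_def)
    have eq: "transl_rows N (Q *v r 1) (rot_rows (- Q) r) = (\<lambda>a. if a \<in> {1..N} then E s r *v (r 1 - r a) else 0)"
    proof
      fix a
      show "transl_rows N (Q *v r 1) (rot_rows (- Q) r) a = (if a \<in> {1..N} then E s r *v (r 1 - r a) else 0)"
      proof (cases "a \<in> {1..N}")
        case True
        then have "Q *v (r 1 - r a) = E s r *v (r 1 - r a)" using QE by blast
        then show ?thesis using True
          by (simp add: transl_rows_def rot_rows_def matrix_vector_mult_diff_distrib mv_neg)
      next
        case False
        then have "r a = 0" using wf by (simp add: wf_mol_def)
        then show ?thesis using False by (auto simp: transl_rows_def rot_rows_def)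
      qed
    qed
    have "f s r = f s (rot_rows (- Q) r)" using f_O3[OF wf mQ] by simp
    also have "\<dots> = f s (transl_rows N (Q *v r 1) (rot_rows (- Q) r))" using f_transl[OF wf2] by simp
    finally show ?thesis using eq by simp
  qed
  define h where "h z = f (decS N z) (decR N z)" for z
  have key: "h (z1 N g phi0 id s r) = f s r" if wf: "wf_mol N s r" for s r
  proof -
    have s_eq: "(\<lambda>a. if a \<in> {1..N} then s a else 0) = s" using wf by (auto simp: wf_mol_def)
    have "h (z1 N g phi0 id s r) = f s (\<lambda>a. if a \<in> {1..N} then E s r *v (r 1 - r a) else 0)"
      unfolding h_def z1_def id_def E_def decode s_eq ..
    then show ?thesis using canon[OF wf] by simp
  qed
  have cardP: "card {\<pi>. \<pi> permutes {1..N}} = fact N" by (rule card_permutations) auto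
  have Feq: "(1 / fact N) *\<^sub>R (\<Sum>\<pi>\<in>{\<pi>. \<pi> permutes {1..N}}. h (z1 N g phi0 id (perm_rows \<pi> s) (perm_rows \<pi> r))) = f s r"
    if wf: "wf_mol N s r" for s r
  proof -
    have "(\<Sum>\<pi>\<in>{\<pi>. \<pi> permutes {1..N}}. h (z1 N g phi0 id (perm_rows \<pi> s) (perm_rows \<pi> r)))
        = (\<Sum>\<pi>\<in>{\<pi>. \<pi> permutes {1..N}}. f s r)"
      by (rule sum.cong) (auto simp: key wf_perm[OF wf] f_perm[OF wf])
    also have "\<dots> = fact N *\<^sub>R f s r" by (simp only: sum_constant_scaleR cardP of_nat_fact)
    finally show ?thesis by simp
  qed
  show ?thesis
    apply (rule exI[of _ phi0], rule exI[of _ id], rule exI[of _ h])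
    unfolding Let_def
    apply (intro conjI allI impI)
    subgoal for s r \<pi>
      using Feq[OF wf_perm[of N s r \<pi>]] Feq[of s r] f_perm[of s r \<pi>] by simp
    subgoal for s r using Feq[of s r] by simp
    done
qed

end
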